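(* Let $n\ge 3$ and $x\in S_n$ avoid $132$. Then there exists $1\le i\le n-2$ with $|\mathrm{Act}_i(x;132)|=|\mathrm{Act}_{i+1}(x;132)|\le|\mathrm{Act}_{i+2}(x;132)|$ if and only if $x$ contains the bivincular pattern $123^{\star}$.
   Context: For $w=w_1\cdots w_{m}\in S_{m}$ and $1\le i\le m+1$, let $w^i$ be the permutation obtained by inserting $m+1$ immediately before $w_i$ (at the end if $i=m+1$). For a pattern $y$, site $i$ of $w$ is active with respect to $y$ if $w^i$ avoids $y$ (has no subsequence order-isomorphic to $y$). For $x\in S_n$ and $1\le k\le n$, let $\mathrm{small}_k(x)$ be the subsequence of $x$ formed by the entries $1,\dots,k$ (a permutation in $S_k$). For $1\le j\le n$, $\mathrm{Act}_j(x;y)$ is the set of active sites of $\mathrm{small}_{n+1-j}(x)$ with respect to $y$. An occurrence of the bivincular pattern $123^{\star}$ in $x$ is a pair of indices $a<b<n$ with $x_a<x_b$ and $x_{b+1}=x_b+1$. *)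

theory Defs
  imports Main
begin

definition is_perm :: "nat \<Rightarrow> nat list \<Rightarrow> bool" where
  "is_perm n w \<longleftrightarrow> length w = n \<and> distinct w \<and> set w = {1..n}"

definition order_iso :: "nat list \<Rightarrow> nat list \<Rightarrow> bool" where
  "order_iso u v \<longleftrightarrow> length u = length v \<and>
     (\<forall>i<length u. \<forall>j<length u. (u ! i < u ! j) = (v ! i < v ! j))"

definition contains :: "nat list \<Rightarrow> nat list \<Rightarrow> bool" where
  "contains w y \<longleftrightarrow> (\<exists>I. order_iso (nths w I) y)"

definition avoids :: "nat list \<Rightarrow> nat list \<Rightarrow> bool" where
  "avoids w y \<longleftrightarrow> \<not> contains w y"

text \<open>w^i: insert (length w + 1) immediately before w_i (1-based), at end if i = m+1.\<close>
definition ins_max :: "nat list \<Rightarrow> nat \<Rightarrow> nat list" where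
  "ins_max w i = take (i - 1) w @ [length w + 1] @ drop (i - 1) w"

definition active_sites :: "nat list \<Rightarrow> nat list \<Rightarrow> nat set" where
  "active_sites w y = {i. 1 \<le> i \<and> i \<le> length w + 1 \<and> avoids (ins_max w i) y}"

definition small :: "nat \<Rightarrow> nat list \<Rightarrow> nat list" where
  "small k x = filter (\<lambda>v. v \<le> k) x"

definition Act :: "nat \<Rightarrow> nat list \<Rightarrow> nat list \<Rightarrow> nat set" where
  "Act j x y = active_sites (small (length x + 1 - j) x) y"

text \<open>Bivincular 123*: 1-based indices a < b < n with x_a < x_b and x_{b+1} = x_b + 1
  (here 0-based).\<close>
definition contains_123star :: "nat list \<Rightarrow> bool" where
  "contains_123star x \<longleftrightarrow> (\<exists>a b. a < b \<and> b + 1 < length x \<and> x ! a < x ! b \<and> x ! (b + 1) = x ! b + 1)"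

end

theory Submission
  imports Defs "HOL-Library.Sublist"
begin


definition bef :: "nat list \<Rightarrow> nat \<Rightarrow> nat \<Rightarrow> bool" where
  "bef w a b \<longleftrightarrow> (\<exists>p q. p < q \<and> q < length w \<and> w ! p = a \<and> w ! q = b)"

lemma bef_Nil[simp]: "\<not> bef [] a b"
  by (simp add: bef_def)

lemma bef_Cons: "bef (y # ys) a b \<longleftrightarrow> (y = a \<and> b \<in> set ys) \<or> bef ys a b"
proof
  assume "bef (y # ys) a b"
  then obtain p q where h: "p < q" "q < length (y#ys)" "(y#ys) ! p = a" "(y#ys) ! q = b"
    by (auto simp: bef_def)
  show "(y = a \<and> b \<in> set ys) \<or> bef ys a b"
  proof (cases p)
    case 0
    then obtain q' where "q = Suc q'" using h by (cases q) auto
    then show ?thesis using h 0 by (auto simp: in_set_conv_nth)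
  next
    case (Suc p')
    then obtain q' where "q = Suc q'" using h by (cases q) auto
    then show ?thesis using h Suc unfolding bef_def by (intro disjI2 exI[of _ p'] exI[of _ q']) auto
  qed
next
  assume "(y = a \<and> b \<in> set ys) \<or> bef ys a b"
  then show "bef (y # ys) a b"
  proof
    assume "y = a \<and> b \<in> set ys"
    then obtain j where "j < length ys" "ys ! j = b" "y = a" by (auto simp: in_set_conv_nth)
    then show ?thesis unfolding bef_def by (intro exI[of _ 0] exI[of _ "Suc j"]) auto
  next
    assume "bef ys a b"
    then obtain p q where "p < q" "q < length ys" "ys ! p = a" "ys ! q = b" by (auto simp: bef_def)
    then show ?thesis unfolding bef_def by (intro exI[of _ "Suc p"] exI[of _ "Suc q"]) auto
  qed
qed

lemma bef_set: "bef w a b \<Longrightarrow> a \<in> set w \<and> b \<in> set w"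
  by (induct w) (auto simp: bef_Cons)

lemma bef_append: "bef (xs @ ys) a b \<longleftrightarrow> bef xs a b \<or> (a \<in> set xs \<and> b \<in> set ys) \<or> bef ys a b"
  by (induct xs) (auto simp: bef_Cons)

lemma bef_filter: "P a \<Longrightarrow> P b \<Longrightarrow> bef (filter P xs) a b \<longleftrightarrow> bef xs a b"
  by (induct xs) (auto simp: bef_Cons)

lemma bef_asym: "distinct w \<Longrightarrow> bef w a b \<Longrightarrow> \<not> bef w b a"
  by (induct w) (auto simp: bef_Cons dest: bef_set)

lemma bef_irrefl: "distinct w \<Longrightarrow> \<not> bef w a a"
  using bef_asym by blast

lemma bef_total: "a \<in> set w \<Longrightarrow> b \<in> set w \<Longrightarrow> a \<noteq> b \<Longrightarrow> bef w a b \<or> bef w b a"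
  by (induct w) (auto simp: bef_Cons)

lemma bef_trans: "distinct w \<Longrightarrow> bef w a b \<Longrightarrow> bef w b c \<Longrightarrow> bef w a c"
  by (induct w) (auto simp: bef_Cons dest: bef_set)

lemma subseq2_bef: "subseq [a, b] w \<longleftrightarrow> bef w a b"
proof (induct w)
  case Nil then show ?case by simp
next
  case (Cons y ys)
  show ?case
  proof (cases "a = y")
    case True then show ?thesis using Cons by (auto simp add: bef_Cons subseq_singleton_left dest: bef_set)
  next
    case False then show ?thesis using Cons by (simp add: bef_Cons)
  qed
qed

lemma subseq3_bef: "distinct w \<Longrightarrow> subseq [a, b, c] w \<longleftrightarrow> bef w a b \<and> bef w b c"
proof (induct w)
  case Nil then show ?case by simp
next
  case (Cons y ys)
  show ?case
  proof (cases "a = y")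
    case True then show ?thesis using Cons by (auto simp add: bef_Cons subseq2_bef dest: bef_set)
  next
    case False then show ?thesis using Cons by (auto simp add: bef_Cons dest: bef_set)
  qed
qed

definition c132 :: "nat list \<Rightarrow> bool" where
  "c132 w \<longleftrightarrow> (\<exists>a b c. bef w a b \<and> bef w b c \<and> a < c \<and> c < b)"

lemma order_iso_132: "order_iso s [1,3,2] \<longleftrightarrow> (\<exists>a b c. s = [a,b,c] \<and> a < c \<and> c < b)"
proof
  assume h: "order_iso s [1,3,2]"
  then have l: "length s = 3" by (simp add: order_iso_def)
  then have s: "s = [s!0, s!1, s!2]"
    by (cases s; cases "tl s"; cases "tl (tl s)") auto
  have "s!0 < s!2" "s!2 < s!1" using h unfolding order_iso_def
    by (metis l nth_Cons_0 nth_Cons_Suc numeral_2_eq_2 numeral_3_eq_3 less_Suc_eq one_less_numeral_iff semiring_norm(77) zero_less_Suc One_nat_def)+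
  then show "\<exists>a b c. s = [a,b,c] \<and> a < c \<and> c < b" using s by blast
next
  assume "\<exists>a b c. s = [a,b,c] \<and> a < c \<and> c < b"
  then obtain a b c where "s = [a,b,c]" "a < c" "c < b" by blast
  then show "order_iso s [1,3,2]" unfolding order_iso_def
    by (auto simp: less_Suc_eq numeral_3_eq_3 nth_Cons split: nat.splits)
qed

lemma contains_132: "distinct w \<Longrightarrow> contains w [1,3,2] \<longleftrightarrow> c132 w"
  unfolding contains_def order_iso_132 c132_def
  by (metis subseq3_bef subseq_conv_nths)

lemma befM: "a \<noteq> M \<Longrightarrow> b \<noteq> M \<Longrightarrow> bef (P @ M # S) a b \<longleftrightarrow> bef (P @ S) a b"
  by (auto simp: bef_append bef_Cons)

lemma c132_ins:
  assumes "\<not> c132 (P @ S)" "\<forall>v\<in>set (P @ S). v < M"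
  shows "c132 (P @ M # S) \<longleftrightarrow> (\<exists>a\<in>set P. \<exists>c\<in>set S. a < c)"
proof
  assume "c132 (P @ M # S)"
  then obtain a b c where h: "bef (P @ M # S) a b" "bef (P @ M # S) b c" "a < c" "c < b"
    unfolding c132_def by blast
  have sa: "a \<in> set (P @ M # S)" "b \<in> set (P @ M # S)" "c \<in> set (P @ M # S)"
    using h bef_set by blast+
  have bM: "b \<le> M" "c \<le> M" using sa(2,3) assms(2)
    by (metis Un_iff less_imp_le_nat set_append set_ConsD order_refl)+
  have "c \<noteq> M" using h(4) bM by auto
  moreover have "a \<noteq> M" using h(3) bM by auto
  ultimately show "\<exists>a\<in>set P. \<exists>c\<in>set S. a < c"
  proof (cases "b = M")
    case True
    then have "a \<in> set P" "c \<in> set S" using h \<open>a \<noteq> M\<close> \<open>c \<noteq> M\<close> assms(2)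
      by (auto simp: bef_append bef_Cons dest: bef_set)
    then show ?thesis using h by blast
  next
    case False
    then have "c132 (P @ S)" using h \<open>a \<noteq> M\<close> \<open>c \<noteq> M\<close> unfolding c132_def
      by (metis befM)
    then show ?thesis using assms by blast
  qed
next
  assume "\<exists>a\<in>set P. \<exists>c\<in>set S. a < c"
  then obtain a c where "a \<in> set P" "c \<in> set S" "a < c" by blast
  moreover have "c < M" using assms(2) \<open>c \<in> set S\<close> by auto
  ultimately show "c132 (P @ M # S)" unfolding c132_def
    by (intro exI[of _ a] exI[of _ M] exI[of _ c]) (auto simp: bef_append bef_Cons)
qed

definition Dw :: "nat list \<Rightarrow> nat \<Rightarrow> nat \<Rightarrow> bool" where
  "Dw w k v \<longleftrightarrow> (\<forall>a b. v < a \<and> a \<le> k \<and> 1 \<le> b \<and> b \<le> v \<longrightarrow> bef w a b)"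

context
  fixes w :: "nat list" and k t :: nat
  assumes d: "distinct w" and sw: "set w = {1..k}" and tk: "t \<le> k"
begin

lemma lw: "length w = k"
  using d sw distinct_card by fastforce

lemma TD: "set (take t w) \<inter> set (drop t w) = {}" "set (take t w) \<union> set (drop t w) = {1..k}"
  "card (set (take t w)) = t" "card (set (drop t w)) = k - t"
proof -
  show "set (take t w) \<inter> set (drop t w) = {}"
    using d by (metis append_take_drop_id disjoint_iff distinct_append)
  show "set (take t w) \<union> set (drop t w) = {1..k}"
    using sw by (metis append_take_drop_id set_append)
  show "card (set (take t w)) = t" using d tk lw by (simp add: distinct_card)
  show "card (set (drop t w)) = k - t" using d tk lw by (simp add: distinct_card)
qed

lemma cutA: "(\<forall>a\<in>set (take t w). \<forall>c\<in>set (drop t w). \<not> a < c) \<longleftrightarrow> set (take t w) = {k-t<..k}"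
proof
  assume h: "\<forall>a\<in>set (take t w). \<forall>c\<in>set (drop t w). \<not> a < c"
  have sub: "set (take t w) \<subseteq> {k-t<..k}"
  proof
    fix a assume a: "a \<in> set (take t w)"
    then have a1: "1 \<le> a" "a \<le> k" using TD(2) by auto
    show "a \<in> {k-t<..k}"
    proof (rule ccontr)
      assume "a \<notin> {k-t<..k}"
      then have "a \<le> k - t" using a1 by auto
      have "set (drop t w) \<subseteq> {1..<a}"
      proof
        fix c assume c: "c \<in> set (drop t w)"
        then have "c \<noteq> a" using a TD(1) by auto
        then show "c \<in> {1..<a}" using h a c TD(2) by fastforce
      qed
      then have "card (set (drop t w)) \<le> a - 1"
        by (metis card_atLeastLessThan card_mono finite_atLeastLessThan)
      then show False using TD(4) \<open>a \<le> k - t\<close> a1 by linarith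
    qed
  qed
  moreover have "card {k-t<..k} = t" using tk by simp
  ultimately show "set (take t w) = {k-t<..k}"
    using TD(3) by (metis card_subset_eq finite_greaterThanAtMost)
next
  assume h: "set (take t w) = {k-t<..k}"
  show "\<forall>a\<in>set (take t w). \<forall>c\<in>set (drop t w). \<not> a < c"
  proof (intro ballI)
    fix a c assume a: "a \<in> set (take t w)" and c: "c \<in> set (drop t w)"
    then have "c \<notin> {k-t<..k}" "c \<in> {1..k}" using TD h by auto
    then show "\<not> a < c" using a h by auto
  qed
qed

lemma cutB: "set (take t w) = {k-t<..k} \<longleftrightarrow> Dw w k (k - t)"
proof
  assume h: "set (take t w) = {k-t<..k}"
  show "Dw w k (k - t)" unfolding Dw_def
  proof (intro allI impI)
    fix a b assume ab: "k - t < a \<and> a \<le> k \<and> 1 \<le> b \<and> b \<le> k - t"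
    then have "a \<in> set (take t w)" using h by auto
    moreover have "b \<in> {1..k}" "b \<notin> {k-t<..k}" using ab tk by auto
    then have "b \<in> set (drop t w)" using TD(2) h by blast
    ultimately show "bef w a b"
      by (metis append_take_drop_id bef_append)
  qed
next
  assume h: "Dw w k (k - t)"
  have sub: "set (take t w) \<subseteq> {k-t<..k}"
  proof
    fix a assume a: "a \<in> set (take t w)"
    then have a1: "1 \<le> a" "a \<le> k" using TD(2) by auto
    show "a \<in> {k-t<..k}"
    proof (rule ccontr)
      assume "a \<notin> {k-t<..k}"
      then have ak: "a \<le> k - t" using a1 by auto
      have "{k-t<..k} \<subseteq> set (take t w)"
      proof
        fix a' assume a': "a' \<in> {k-t<..k}"
        then have "bef w a' a" using h ak a1 unfolding Dw_def by auto
        then have "bef (take t w @ drop t w) a' a" by simp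
        then show "a' \<in> set (take t w)" using a TD(1)
          unfolding bef_append by (auto dest: bef_set)
      qed
      then have "insert a {k-t<..k} \<subseteq> set (take t w)" using a by auto
      then have "card (insert a {k-t<..k}) \<le> t" using TD(3)
        by (metis card_mono finite_set)
      then show False using \<open>a \<notin> {k-t<..k}\<close> tk by simp
    qed
  qed
  moreover have "card {k-t<..k} = t" using tk by simp
  ultimately show "set (take t w) = {k-t<..k}"
    using TD(3) by (metis card_subset_eq finite_greaterThanAtMost)
qed

end

lemma act_char:
  assumes d: "distinct w" and sw: "set w = {1..k}" and nc: "\<not> c132 w"
    and i: "1 \<le> i" "i \<le> k + 1"
  shows "avoids (ins_max w i) [1,3,2] \<longleftrightarrow> Dw w k (k + 1 - i)"
proof -
  have lw: "length w = k" using lw[OF d sw, of 0] by simp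
  let ?P = "take (i-1) w" and ?S = "drop (i-1) w"
  have im: "ins_max w i = ?P @ (k+1) # ?S" by (simp add: ins_max_def lw)
  have kn: "k + 1 \<notin> set w" using sw by auto
  have dd: "distinct (?P @ (k+1) # ?S)"
  proof -
    have "distinct (?P @ ?S)" using d by simp
    moreover have "k+1 \<notin> set ?P" "k+1 \<notin> set ?S" using kn by (auto dest: in_set_takeD in_set_dropD)
    ultimately show ?thesis by (simp only: distinct_append distinct.simps set_simps) auto
  qed
  have ps: "?P @ ?S = w" by simp
  have lt: "\<forall>v\<in>set (?P @ ?S). v < k + 1" using sw by auto
  have "avoids (ins_max w i) [1,3,2] \<longleftrightarrow> \<not> c132 (?P @ (k+1) # ?S)"
    unfolding avoids_def im using contains_132[OF dd] by simp
  also have "\<dots> \<longleftrightarrow> \<not> (\<exists>a\<in>set ?P. \<exists>c\<in>set ?S. a < c)"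
    using c132_ins[of ?P ?S "k+1"] nc lt ps by simp
  also have "\<dots> \<longleftrightarrow> set ?P = {k-(i-1)<..k}"
    using cutA[OF d sw, of "i-1"] i by auto
  also have "\<dots> \<longleftrightarrow> Dw w k (k - (i-1))"
    using cutB[OF d sw, of "i-1"] i by auto
  also have "k - (i-1) = k + 1 - i" using i by auto
  finally show ?thesis .
qed

lemma card_active:
  assumes d: "distinct w" and sw: "set w = {1..k}" and nc: "\<not> c132 w"
  shows "card (active_sites w [1,3,2]) = card {v. v \<le> k \<and> Dw w k v}"
proof -
  have lw: "length w = k" using lw[OF d sw, of 0] by simp
  have "active_sites w [1,3,2] = (\<lambda>v. k + 1 - v) ` {v. v \<le> k \<and> Dw w k v}"
  proof (rule set_eqI)
    fix i
    show "i \<in> active_sites w [1,3,2] \<longleftrightarrow> i \<in> (\<lambda>v. k + 1 - v) ` {v. v \<le> k \<and> Dw w k v}"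
    proof
      assume "i \<in> active_sites w [1,3,2]"
      then have i: "1 \<le> i" "i \<le> k + 1" "avoids (ins_max w i) [1,3,2]"
        unfolding active_sites_def lw by auto
      then have "Dw w k (k + 1 - i)" using act_char[OF d sw nc] by blast
      moreover have "i = k + 1 - (k + 1 - i)" using i by auto
      moreover have "k + 1 - i \<le> k" using i by auto
      ultimately show "i \<in> (\<lambda>v. k + 1 - v) ` {v. v \<le> k \<and> Dw w k v}"
        by (intro image_eqI[of _ _ "k + 1 - i"]) auto
    next
      assume "i \<in> (\<lambda>v. k + 1 - v) ` {v. v \<le> k \<and> Dw w k v}"
      then obtain v where v: "v \<le> k" "Dw w k v" "i = k + 1 - v" by auto
      then have i: "1 \<le> i" "i \<le> k + 1" "k + 1 - i = v" by auto
      then show "i \<in> active_sites w [1,3,2]"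
        using act_char[OF d sw nc i(1,2)] v unfolding active_sites_def lw by auto
    qed
  qed
  moreover have "inj_on (\<lambda>v. k + 1 - v) {v. v \<le> k \<and> Dw w k v}"
    by (auto simp: inj_on_def)
  ultimately show ?thesis by (simp add: card_image)
qed

definition D :: "nat list \<Rightarrow> nat \<Rightarrow> nat \<Rightarrow> bool" where
  "D x v k \<longleftrightarrow> (\<forall>a b. v < a \<and> a \<le> k \<and> 1 \<le> b \<and> b \<le> v \<longrightarrow> bef x a b)"

definition G :: "nat list \<Rightarrow> nat \<Rightarrow> nat set" where
  "G x k = {v. 1 \<le> v \<and> v < k \<and> D x v k}"

lemma card_Act:
  assumes p: "is_perm n x" and nc: "\<not> c132 x" and j: "1 \<le> j" "j \<le> n"
  shows "card (Act j x [1,3,2]) = card (G x (n + 1 - j)) + 2"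
proof -
  define k where "k = n + 1 - j"
  have k: "1 \<le> k" "k \<le> n" using j by (auto simp: k_def)
  have lx: "length x = n" and dx: "distinct x" and sx: "set x = {1..n}"
    using p by (auto simp: is_perm_def)
  define w where "w = small k x"
  have dw: "distinct w" using dx by (simp add: w_def small_def)
  have sw: "set w = {1..k}" using sx k by (auto simp: w_def small_def)
  have ncw: "\<not> c132 w"
  proof
    assume "c132 w"
    then obtain a b c where h: "bef w a b" "bef w b c" "a < c" "c < b" by (auto simp: c132_def)
    then have "a \<le> k" "b \<le> k" "c \<le> k" using bef_set sw by fastforce+
    then have "bef x a b" "bef x b c" using h bef_filter[of "\<lambda>v. v \<le> k"]
      unfolding w_def small_def by auto
    then show False using nc h unfolding c132_def by blast
  qed
  have "card (Act j x [1,3,2]) = card {v. v \<le> k \<and> Dw w k v}"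
    unfolding Act_def lx using card_active[OF dw sw ncw] by (simp add: w_def k_def)
  also have "{v. v \<le> k \<and> Dw w k v} = {0, k} \<union> G x k"
  proof -
    have "Dw w k v \<longleftrightarrow> D x v k" for v
      unfolding Dw_def D_def w_def small_def
      by (intro iff_allI iff_exI; rule iffI; intro allI impI; fastforce simp: bef_filter)
    moreover have "Dw w k 0" "Dw w k k" unfolding Dw_def by auto
    ultimately show ?thesis unfolding G_def using k by auto
  qed
  also have "card ({0, k} \<union> G x k) = card (G x k) + 2"
  proof -
    have "finite (G x k)" unfolding G_def by auto
    moreover have "{0, k} \<inter> G x k = {}" unfolding G_def by auto
    ultimately show ?thesis using k by (simp add: card_Un_disjoint)
  qed
  finally show ?thesis by (simp add: k_def)
qed

definition E :: "nat list \<Rightarrow> nat \<Rightarrow> bool" where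
  "E x k \<longleftrightarrow> (\<exists>u. 1 \<le> u \<and> u < k \<and> bef x u k)"

lemma finG: "finite (G x k)"
  unfolding G_def by (rule finite_subset[of _ "{..<k}"]) auto

lemma bef_at: "distinct x \<Longrightarrow> bef x a b \<Longrightarrow> p < length x \<Longrightarrow> x ! p = a \<Longrightarrow>
  \<exists>q. p < q \<and> q < length x \<and> x ! q = b"
proof -
  assume dx: "distinct x" and bb: "bef x a b" and pl: "p < length x" and xp: "x ! p = a"
  obtain p0 q0 where h: "p0 < q0" "q0 < length x" "x ! p0 = a" "x ! q0 = b"
    using bb unfolding bef_def by blast
  have "p0 = p" using nth_eq_iff_index_eq[OF dx, of p0 p] h pl xp by auto
  then show ?thesis using h by blast
qed

lemma bef_at2: "distinct x \<Longrightarrow> bef x a b \<Longrightarrow> q < length x \<Longrightarrow> x ! q = b \<Longrightarrow>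
  \<exists>p. p < q \<and> x ! p = a"
proof -
  assume dx: "distinct x" and bb: "bef x a b" and pl: "q < length x" and xp: "x ! q = b"
  obtain p0 q0 where h: "p0 < q0" "q0 < length x" "x ! p0 = a" "x ! q0 = b"
    using bb unfolding bef_def by blast
  have "q0 = q" using nth_eq_iff_index_eq[OF dx, of q0 q] h pl xp by auto
  then show ?thesis using h by blast
qed

context
  fixes n :: nat and x :: "nat list"
  assumes p: "is_perm n x" and nc: "\<not> c132 x"
begin

lemma dx: "distinct x" and sx: "set x = {1..n}" and lx: "length x = n"
  using p by (auto simp: is_perm_def)

lemma no132: "bef x a b \<Longrightarrow> bef x b c \<Longrightarrow> a < c \<Longrightarrow> c < b \<Longrightarrow> False"
  using nc unfolding c132_def by blast

lemma tot: "1 \<le> a \<Longrightarrow> a \<le> n \<Longrightarrow> 1 \<le> b \<Longrightarrow> b \<le> n \<Longrightarrow> a \<noteq> b \<Longrightarrow> \<not> bef x a b \<Longrightarrow> bef x b a"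
  using bef_total[of a x b] sx by auto

lemma L1:
  assumes k: "2 \<le> k" "k \<le> n" and ne: "\<not> E x k"
  shows "card (G x k) = card (G x (k - 1)) + 1"
proof -
  have kb: "bef x k u" if "1 \<le> u" "u < k" for u
    using ne that k tot[of k u] unfolding E_def by auto
  have "G x k = insert (k - 1) (G x (k - 1))"
  proof (rule set_eqI)
    fix v
    have "D x v k \<longleftrightarrow> D x v (k - 1)" if vk: "v < k - 1" for v
    proof
      assume h: "D x v k"
      show "D x v (k - 1)" using h unfolding D_def by auto
    next
      assume h: "D x v (k - 1)"
      show "D x v k" unfolding D_def
      proof (intro allI impI)
        fix a b assume ab: "v < a \<and> a \<le> k \<and> 1 \<le> b \<and> b \<le> v"
        show "bef x a b"
        proof (cases "a = k")
          case True then show ?thesis using kb ab vk by auto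
        next
          case False then show ?thesis using h ab unfolding D_def by auto
        qed
      qed
    qed
    moreover have "D x (k - 1) k" unfolding D_def
    proof (intro allI impI)
      fix a b assume h: "k - 1 < a \<and> a \<le> k \<and> 1 \<le> b \<and> b \<le> k - 1"
      then have "a = k" by auto
      then show "bef x a b" using kb h k by auto
    qed
    ultimately show "v \<in> G x k \<longleftrightarrow> v \<in> insert (k - 1) (G x (k - 1))"
      unfolding G_def using k by (cases "v = k - 1") auto
  qed
  moreover have "k - 1 \<notin> G x (k - 1)" unfolding G_def by auto
  ultimately show ?thesis using finG by simp
qed

lemma L2:
  assumes k: "2 \<le> k" "k \<le> n" and e: "E x k"
  shows "G x k \<subseteq> G x (k - 1)"
proof
  fix v assume v: "v \<in> G x k"
  obtain u where u: "1 \<le> u" "u < k" "bef x u k" using e unfolding E_def by auto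
  have "v \<noteq> k - 1"
  proof
    assume "v = k - 1"
    then have "bef x k u" using v u unfolding G_def D_def by auto
    then show False using u bef_asym[OF dx] by blast
  qed
  then show "v \<in> G x (k - 1)" using v unfolding G_def D_def by auto
qed

lemma L2c:
  assumes k: "2 \<le> k" "k \<le> n" and e: "E x k"
  shows "card (G x k) \<le> card (G x (k - 1))"
  using L2[OF k e] finG by (simp add: card_mono)

lemma forward:
  assumes k: "3 \<le> k" "k \<le> n"
    and c1: "card (G x k) = card (G x (k - 1))"
    and c2: "card (G x (k - 1)) \<le> card (G x (k - 2))"
  shows "contains_123star x"
proof -
  have Ek: "E x k" using L1[of k] k c1 by force
  have Ek1: "E x (k - 1)" using L1[of "k - 1"] k c2 by (force simp: numeral_2_eq_2 diff_diff_add)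
  have sub: "G x k \<subseteq> G x (k - 1)" using L2[of k] k Ek by auto
  have Geq: "G x k = G x (k - 1)" using card_subset_eq[OF finG sub] c1 by simp
  obtain u where u: "1 \<le> u" "u < k" "bef x u k" using Ek unfolding E_def by auto
  have bk: "bef x (k - 1) k"
  proof (cases "u = k - 1")
    case True then show ?thesis using u by simp
  next
    case False
    show ?thesis
    proof (rule ccontr)
      assume "\<not> bef x (k - 1) k"
      then have "bef x k (k - 1)" using tot[of "k - 1" k] k by auto
      moreover have "u < k - 1" using u False by auto
      ultimately show False using no132[of u k "k - 1"] u by auto
    qed
  qed
  then obtain p q where pq: "p < q" "q < n" "x ! p = k - 1" "x ! q = k"
    unfolding bef_def lx by auto
  have q: "q = Suc p"
  proof (rule ccontr)
    assume "q \<noteq> Suc p"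
    then have r: "Suc p < q" using pq by auto
    define y where "y = x ! Suc p"
    have yin: "y \<in> set x" using r pq by (simp add: y_def lx)
    have yne: "y \<noteq> k - 1" "y \<noteq> k"
      using nth_eq_iff_index_eq[OF dx, of "Suc p" p] nth_eq_iff_index_eq[OF dx, of "Suc p" q] pq r lx
      unfolding y_def by auto
    have b1: "bef x (k - 1) y" unfolding bef_def using pq r lx y_def by (intro exI[of _ p] exI[of _ "Suc p"]) auto
    have b2: "bef x y k" unfolding bef_def using pq r lx y_def by (intro exI[of _ "Suc p"] exI[of _ q]) auto
    have y1: "1 \<le> y" "y \<le> n" using yin sx by auto
    show False
    proof (cases "y > k")
      case True then show ?thesis using no132[OF b1 b2] k by auto
    next
      case False
      then have yk: "y < k - 1" using yne by auto
      define T where "T = {z. 1 \<le> z \<and> z < k - 1 \<and> bef x (k - 1) z}"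
      have finT: "finite T" unfolding T_def by (rule finite_subset[of _ "{..<k}"]) auto
      have yT: "y \<in> T" unfolding T_def using y1 yk b1 by auto
      define v where "v = Max T"
      have vT: "v \<in> T" unfolding v_def using finT yT Max_in by blast
      have yv: "y \<le> v" unfolding v_def using finT yT by simp
      have v1: "1 \<le> v" "v < k - 1" "bef x (k - 1) v" using vT unfolding T_def by auto
      have kb: "bef x (k - 1) b" if "1 \<le> b" "b \<le> v" for b
      proof (rule ccontr)
        assume nb: "\<not> bef x (k - 1) b"
        then have bb: "bef x b (k - 1)" using tot[of "k - 1" b] that v1 k by auto
        have "b \<noteq> v" using bb v1 bef_asym[OF dx] by blast
        then show False using no132[OF bb v1(3)] that v1 by auto
      qed
      have "D x v (k - 1)" unfolding D_def
      proof (intro allI impI)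
        fix a b assume ab: "v < a \<and> a \<le> k - 1 \<and> 1 \<le> b \<and> b \<le> v"
        show "bef x a b"
        proof (cases "a = k - 1")
          case True then show ?thesis using kb ab by auto
        next
          case False
          have "a \<notin> T" using ab finT unfolding v_def by (metis Max_ge not_le)
          then have "\<not> bef x (k - 1) a" using ab False unfolding T_def by auto
          then have "bef x a (k - 1)" using tot[of "k - 1" a] ab False k v1 by auto
          then show ?thesis using kb ab bef_trans[OF dx] by blast
        qed
      qed
      then have "v \<in> G x (k - 1)" using v1 unfolding G_def by auto
      then have "D x v k" using Geq unfolding G_def by auto
      then have "bef x k y" using yv y1 v1 unfolding D_def by auto
      then show False using b2 bef_asym[OF dx] by blast
    qed
  qed
  obtain u' where u': "1 \<le> u'" "u' < k - 1" "bef x u' (k - 1)" using Ek1 unfolding E_def by auto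
  obtain p' where p': "p' < p" "x ! p' = u'" using bef_at2[OF dx u'(3), of p] pq lx by auto
  show ?thesis unfolding contains_123star_def lx
    using p' pq q u' k by (intro exI[of _ p'] exI[of _ p]) auto
qed

lemma backward:
  assumes "contains_123star x"
  shows "\<exists>k. 3 \<le> k \<and> k \<le> n \<and> card (G x k) = card (G x (k - 1)) \<and>
      card (G x (k - 1)) \<le> card (G x (k - 2))"
proof -
  obtain a b where ab: "a < b" "b + 1 < n" "x ! a < x ! b" "x ! (b + 1) = x ! b + 1"
    using assms unfolding contains_123star_def lx by auto
  define m where "m = x ! b"
  have xa1: "x ! a \<in> set x" using ab lx by simp
  have xa2: "x ! (b+1) \<in> set x" by (rule nth_mem) (use ab lx in simp)
  note xa = xa1 xa2
  have m: "2 \<le> m" "m + 1 \<le> n" using xa sx ab unfolding m_def by auto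
  have bm: "bef x m (m + 1)" unfolding bef_def m_def using ab lx
    by (intro exI[of _ b] exI[of _ "b+1"]) auto
  have Ek: "E x (m + 1)" unfolding E_def using bm m by (intro exI[of _ m]) auto
  have bam: "bef x (x ! a) m" unfolding bef_def m_def using ab lx
    by (intro exI[of _ a] exI[of _ b]) auto
  have "1 \<le> x ! a" using xa sx by auto
  then have Em: "E x m" unfolding E_def using bam ab unfolding m_def by blast
  have s1: "G x (m + 1) \<subseteq> G x m" using L2[of "m + 1"] Ek m by auto
  have s2: "G x m \<subseteq> G x (m + 1)"
  proof
    fix v assume v: "v \<in> G x m"
    have "D x v (m + 1)" unfolding D_def
    proof (intro allI impI)
      fix a' b' assume h: "v < a' \<and> a' \<le> m + 1 \<and> 1 \<le> b' \<and> b' \<le> v"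
      show "bef x a' b'"
      proof (cases "a' = m + 1")
        case False then show ?thesis using v h unfolding G_def D_def by auto
      next
        case True
        have "bef x m b'" using v h unfolding G_def D_def by auto
        then obtain q where q: "b < q" "q < length x" "x ! q = b'"
          using bef_at[OF dx, of m b' b] ab lx unfolding m_def by auto
        have "q \<noteq> b + 1" using q ab h v unfolding G_def m_def by auto
        then show ?thesis unfolding bef_def using q ab True m_def
          by (intro exI[of _ "b+1"] exI[of _ q]) auto
      qed
    qed
    then show "v \<in> G x (m + 1)" using v unfolding G_def by auto
  qed
  have s3: "G x m \<subseteq> G x (m - 1)" using L2[of m] Em m by auto
  have "card (G x m) \<le> card (G x (m - 1))" using card_mono[OF finG s3] .
  moreover have "G x (m + 1) = G x m" using s1 s2 by blast
  ultimately show ?thesis using m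
    by (intro exI[of _ "m + 1"]) (auto simp: numeral_2_eq_2)
qed

end

theorem theorem3p17:
  fixes n :: nat and x :: "nat list"
  assumes "n \<ge> 3" and "is_perm n x" and "avoids x [1, 3, 2]"
  shows "(\<exists>i. 1 \<le> i \<and> i \<le> n - 2 \<and>
            card (Act i x [1, 3, 2]) = card (Act (i + 1) x [1, 3, 2]) \<and>
            card (Act (i + 1) x [1, 3, 2]) \<le> card (Act (i + 2) x [1, 3, 2]))
         \<longleftrightarrow> contains_123star x"
proof -
  have dx: "distinct x" using assms(2) by (simp add: is_perm_def)
  have nc: "\<not> c132 x" using assms(3) contains_132[OF dx] by (simp add: avoids_def)
  note cA = card_Act[OF assms(2) nc]
  show ?thesis
  proof
    assume "\<exists>i. 1 \<le> i \<and> i \<le> n - 2 \<and>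
            card (Act i x [1, 3, 2]) = card (Act (i + 1) x [1, 3, 2]) \<and>
            card (Act (i + 1) x [1, 3, 2]) \<le> card (Act (i + 2) x [1, 3, 2])"
    then obtain i where i: "1 \<le> i" "i \<le> n - 2"
      "card (Act i x [1, 3, 2]) = card (Act (i + 1) x [1, 3, 2])"
      "card (Act (i + 1) x [1, 3, 2]) \<le> card (Act (i + 2) x [1, 3, 2])" by blast
    define k where "k = n + 1 - i"
    have k: "3 \<le> k" "k \<le> n" using i assms(1) by (auto simp: k_def)
    have e0: "card (Act i x [1, 3, 2]) = card (G x k) + 2"
      using cA[of i] i assms(1) by (simp add: k_def)
    have e1: "card (Act (i + 1) x [1, 3, 2]) = card (G x (k - 1)) + 2"
      using cA[of "i + 1"] i assms(1) by (simp add: k_def)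
    have e2: "card (Act (i + 2) x [1, 3, 2]) = card (G x (k - 2)) + 2"
      using cA[of "i + 2"] i assms(1) by (simp add: k_def)
    show "contains_123star x"
      using forward[OF assms(2) nc k] i e0 e1 e2 by simp
  next
    assume "contains_123star x"
    then obtain k where k: "3 \<le> k" "k \<le> n" "card (G x k) = card (G x (k - 1))"
      "card (G x (k - 1)) \<le> card (G x (k - 2))"
      using backward[OF assms(2) nc] by blast
    define i where "i = n + 1 - k"
    have i: "1 \<le> i" "i \<le> n - 2" using k by (auto simp: i_def)
    have e0: "card (Act i x [1, 3, 2]) = card (G x k) + 2"
      using cA[of i] i k by (simp add: i_def)
    have e1: "card (Act (i + 1) x [1, 3, 2]) = card (G x (k - 1)) + 2"
      using cA[of "i + 1"] i k by (simp add: i_def)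
    have e2: "card (Act (i + 2) x [1, 3, 2]) = card (G x (k - 2)) + 2"
      using cA[of "i + 2"] i k by (simp add: i_def)
    show "\<exists>i. 1 \<le> i \<and> i \<le> n - 2 \<and>
            card (Act i x [1, 3, 2]) = card (Act (i + 1) x [1, 3, 2]) \<and>
            card (Act (i + 1) x [1, 3, 2]) \<le> card (Act (i + 2) x [1, 3, 2])"
      using i e0 e1 e2 k by (intro exI[of _ i]) simp
  qed
qed
end
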